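(* In CCS, for every channel $a\in\mathcal{C}$ and all processes $x,y,z$: (1) $x\xrightarrow{\tau}y$ iff $x\to y$; (2) $x\xrightarrow{a}y$ iff $(x,\bar a.\mathbf{0})\to y$; (3) $x\xrightarrow{\bar a}y$ iff $(x,a.\mathbf{0})\to y$; (4) $(x,y)\to z$ iff there exist a channel $b$ and processes $x',y'$ with $z\equiv x'\parallel y'$ and either ($x\xrightarrow{b}x'$ and $y\xrightarrow{\bar b}y'$) or ($x\xrightarrow{\bar b}x'$ and $y\xrightarrow{b}y'$). Here $\xrightarrow{\alpha}$ is the CCS labelled transition relation and $\to$ is the reaction relation of the CCS dialgebra.
   Context: Let $\mathcal{C}$ be a countable set of channels. Prefixes: $\alpha::=\tau\mid a\mid\bar a$ ($a\in\mathcal{C}$). Processes: $P::=\sum_{i\in I}\alpha_i.P_i\mid P_1\parallel P_2\mid(\nu a)P$ with $I$ finite, sums taken up to reordering of summands; $\mathbf{0}$ is the empty sum, $\alpha.P$ a one-summand sum, and $\alpha.P+Q$ denotes a sum having $\alpha.P$ as a summand. Free names: $\mathit{fn}(\tau)=\emptyset$, $\mathit{fn}(a)=\mathit{fn}(\bar a)=\{a\}$, $\mathit{fn}(\sum\alpha_i.P_i)=\bigcup_i(\mathit{fn}(\alpha_i)\cup\mathit{fn}(P_i))$, $\mathit{fn}(P\parallel Q)=\mathit{fn}(P)\cup\mathit{fn}(Q)$, $\mathit{fn}((\nu a)P)=\mathit{fn}(P)\setminus\{a\}$. Structural congruence $\equiv$ is the least congruence containing $\alpha$-conversion of $a$ in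 $(\nu a)P$, the commutative monoid laws for $\parallel$ with unit $\mathbf{0}$, and $(\nu a)(P\parallel Q)\equiv((\nu a)P)\parallel Q$ if $a\notin\mathit{fn}(Q)$, $(\nu a)\mathbf{0}\equiv\mathbf{0}$, $(\nu a)(\nu b)P\equiv(\nu b)(\nu a)P$. The CCS LTS is the least relation $P\xrightarrow{\alpha}P'$ closed under: (pre) $\alpha.P+Q\xrightarrow{\alpha}P$; (res) if $a\notin\mathit{fn}(\alpha)$ and $P\xrightarrow{\alpha}P'$ then $(\nu a)P\xrightarrow{\alpha}(\nu a)P'$; (par) if $P\xrightarrow{\alpha}P'$ then $P\parallel Q\xrightarrow{\alpha}P'\parallel Q$; (syn) if $P\xrightarrow{\bar c}P'$ and $Q\xrightarrow{c}Q'$ then $P\parallel Q\xrightarrow{\tau}P'\parallel Q'$; (str) if $P\equiv Q$, $P'\equiv Q'$ and $P\xrightarrow{\alpha}P'$ then $Q\xrightarrow{\alpha}Q'$. The CCS dialgebra reaction relation consists of the least relations $P\to R$ (processes) and $(P,Q)\to R$ (pairs of processes) closed under: (tau) $\tau.P+Q\to P$; (res) $P\to P'$ implies $(\nu a)P\to(\nu a)P'$; (par$_1$) $P\to P'$ implies $P\parallel Q\to P'\parallel Q$; (int) $(P,Q)\to R$ implies $P\parallel Q\to R$; (hid) $(P,Q)\to R$ and $a\notin\mathit{fn}(Q)$ imply $((\nu a)P,Q)\to(\nu a)R$; (par$_2$) $(P,Q)\to R$ implies $(P\parallel S,Q)\to S\parallel R$; (syn) $(\bar a.P+S,a.Q+T)\to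 P\parallel Q$; (sym) $(P,Q)\to R$ implies $(Q,P)\to R$; (str$_1$) $P\to R$, $P\equiv Q$, $R\equiv S$ imply $Q\to S$; (str$_2$) $(P,Q)\to R$, $P\equiv S$, $Q\equiv T$, $R\equiv U$ imply $(S,T)\to U$. *)

theory Defs
  imports "HOL-Library.Multiset" "HOL-Library.Countable"
begin

datatype 'c prefix = Tau | In 'c | Out 'c

text \<open>Processes. Sums are finite multisets of prefixed summands, so that
  sums are taken up to reordering of summands (duplicates are kept).\<close>
datatype 'c proc =
    Sum "('c prefix \<times> 'c proc) multiset"
  | Par "'c proc" "'c proc"
  | Res 'c "'c proc"

abbreviation Nil :: "'c proc" where "Nil \<equiv> Sum {#}"

abbreviation Pre :: "'c prefix \<Rightarrow> 'c proc \<Rightarrow> 'c proc" where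
  "Pre \<alpha> P \<equiv> Sum {#(\<alpha>, P)#}"

fun fnpre :: "'c prefix \<Rightarrow> 'c set" where
  "fnpre Tau = {}"
| "fnpre (In a) = {a}"
| "fnpre (Out a) = {a}"

primrec fnp :: "'c proc \<Rightarrow> 'c set" where
  "fnp (Sum M) = (\<Union>x \<in> set_mset (image_mset (map_prod id fnp) M). fnpre (fst x) \<union> snd x)"
| "fnp (Par P Q) = fnp P \<union> fnp Q"
| "fnp (Res a P) = fnp P - {a}"

definition swapc :: "'c \<Rightarrow> 'c \<Rightarrow> 'c \<Rightarrow> 'c" where
  "swapc a b c = (if c = a then b else if c = b then a else c)"

fun swpre :: "'c \<Rightarrow> 'c \<Rightarrow> 'c prefix \<Rightarrow> 'c prefix" where
  "swpre a b Tau = Tau"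
| "swpre a b (In c) = In (swapc a b c)"
| "swpre a b (Out c) = Out (swapc a b c)"

primrec swp :: "'c \<Rightarrow> 'c \<Rightarrow> 'c proc \<Rightarrow> 'c proc" where
  "swp a b (Sum M) = Sum (image_mset (map_prod (swpre a b) (swp a b)) M)"
| "swp a b (Par P Q) = Par (swp a b P) (swp a b Q)"
| "swp a b (Res c P) = Res (swapc a b c) (swp a b P)"

inductive scong :: "'c proc \<Rightarrow> 'c proc \<Rightarrow> bool" where
  refl: "scong P P"
| sym: "scong P Q \<Longrightarrow> scong Q P"
| trans: "scong P Q \<Longrightarrow> scong Q R \<Longrightarrow> scong P R"
| ctx_sum: "scong P P' \<Longrightarrow> scong (Sum (add_mset (\<alpha>, P) M)) (Sum (add_mset (\<alpha>, P') M))"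
| ctx_par: "scong P P' \<Longrightarrow> scong Q Q' \<Longrightarrow> scong (Par P Q) (Par P' Q')"
| ctx_res: "scong P P' \<Longrightarrow> scong (Res a P) (Res a P')"
| alpha: "b \<notin> fnp P \<Longrightarrow> scong (Res a P) (Res b (swp a b P))"
| par_comm: "scong (Par P Q) (Par Q P)"
| par_assoc: "scong (Par (Par P Q) R) (Par P (Par Q R))"
| par_unit: "scong (Par P Nil) P"
| scope: "a \<notin> fnp Q \<Longrightarrow> scong (Res a (Par P Q)) (Par (Res a P) Q)"
| res_nil: "scong (Res a Nil) Nil"
| res_comm: "scong (Res a (Res b P)) (Res b (Res a P))"

inductive ltrans :: "'c proc \<Rightarrow> 'c prefix \<Rightarrow> 'c proc \<Rightarrow> bool" where
  pre: "ltrans (Sum (add_mset (\<alpha>, P) Q)) \<alpha> P"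
| res: "a \<notin> fnpre \<alpha> \<Longrightarrow> ltrans P \<alpha> P' \<Longrightarrow> ltrans (Res a P) \<alpha> (Res a P')"
| par: "ltrans P \<alpha> P' \<Longrightarrow> ltrans (Par P Q) \<alpha> (Par P' Q)"
| syn: "ltrans P (Out c) P' \<Longrightarrow> ltrans Q (In c) Q' \<Longrightarrow> ltrans (Par P Q) Tau (Par P' Q')"
| str: "scong P Q \<Longrightarrow> scong P' Q' \<Longrightarrow> ltrans P \<alpha> P' \<Longrightarrow> ltrans Q \<alpha> Q'"

text \<open>CCS dialgebra reaction relation: unary reactions P \<rightarrow> R (react1)
  and binary reactions (P,Q) \<rightarrow> R (react2).\<close>
inductive react1 :: "'c proc \<Rightarrow> 'c proc \<Rightarrow> bool"
  and react2 :: "'c proc \<Rightarrow> 'c proc \<Rightarrow> 'c proc \<Rightarrow> bool" where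
  tau: "react1 (Sum (add_mset (Tau, P) Q)) P"
| res: "react1 P P' \<Longrightarrow> react1 (Res a P) (Res a P')"
| par1: "react1 P P' \<Longrightarrow> react1 (Par P Q) (Par P' Q)"
| int: "react2 P Q R \<Longrightarrow> react1 (Par P Q) R"
| hid: "react2 P Q R \<Longrightarrow> a \<notin> fnp Q \<Longrightarrow> react2 (Res a P) Q (Res a R)"
| par2: "react2 P Q R \<Longrightarrow> react2 (Par P S) Q (Par S R)"
| syn: "react2 (Sum (add_mset (Out a, P) S)) (Sum (add_mset (In a, Q) T)) (Par P Q)"
| sym: "react2 P Q R \<Longrightarrow> react2 Q P R"
| str1: "react1 P R \<Longrightarrow> scong P Q \<Longrightarrow> scong R S \<Longrightarrow> react1 Q S"
| str2: "react2 P Q R \<Longrightarrow> scong P S \<Longrightarrow> scong Q T \<Longrightarrow> scong R U \<Longrightarrow> react2 S T U"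

end

theory Submission imports Defs begin

lemma finite_fnpre[simp]: "finite (fnpre p)" by (cases p) auto

lemma finite_fnp: "finite (fnp P)"
proof (induction P)
  case (Sum M) then show ?case by (auto simp: )
qed auto

lemma swapc_invol[simp]: "swapc a b (swapc a b c) = c"
  by (simp add: swapc_def)
lemma swpre_invol[simp]: "swpre a b (swpre a b p) = p"
  by (cases p) auto

lemma swp_invol[simp]: "swp a b (swp a b P) = P"
proof (induction P)
  case (Sum M)
  then show ?case by (auto simp: multiset.map_comp intro!: multiset.map_ident_strong)
qed auto

lemma fnpre_swpre: "fnpre (swpre a b p) = swapc a b ` fnpre p"
  by (cases p) auto

lemma fnp_swp: "fnp (swp a b P) = swapc a b ` fnp P"
proof (induction P)
  case (Sum M)
  then show ?case by (force simp: fnpre_swpre)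
next
  case (Res c P) then show ?case by (auto simp: swapc_def)
qed auto

lemma swapc_conj: "swapc a b (swapc c d x) = swapc (swapc a b c) (swapc a b d) (swapc a b x)"
  unfolding swapc_def by auto


lemma swpre_conj: "swpre a b (swpre c d p) = swpre (swapc a b c) (swapc a b d) (swpre a b p)"
  by (cases p) (simp_all only: swpre.simps swapc_conj[of a b c d])

lemma swp_conj: "swp a b (swp c d P) = swp (swapc a b c) (swapc a b d) (swp a b P)"
proof (induction P)
  case (Sum M)
  then show ?case
    apply (simp add: multiset.map_comp)
    apply (rule multiset.map_cong0)
    apply clarsimp
    apply (rule swpre_conj)
    done
next
  case (Res e P) then show ?case by (simp only: swp.simps swapc_conj[of a b c d])
qed auto

lemma swapc_inj: "swapc a b x = swapc a b y \<longleftrightarrow> x = y"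
  by (metis swapc_invol)

lemma fnp_sum_add[simp]: "fnp (Sum (add_mset (\<alpha>, P) M)) = fnpre \<alpha> \<union> fnp P \<union> fnp (Sum M)"
  by auto

lemma scong_swp: "scong P Q \<Longrightarrow> scong (swp a b P) (swp a b Q)"
proof (induction rule: scong.induct)
  case (alpha d P c)
  have "swapc a b d \<notin> fnp (swp a b P)" using alpha by (auto simp: fnp_swp swapc_inj)
  then show ?case by (simp only: swp.simps swp_conj[of a b c d]) (rule scong.alpha)
next
  case (scope c Q P)
  then show ?case by (auto simp: fnp_swp swapc_inj intro!: scong.scope)
qed (auto intro: scong.intros)

lemma scong_fnp: "scong P Q \<Longrightarrow> fnp P = fnp Q"
proof (induction rule: scong.induct)
  case (alpha b P a)
  then show ?case by (auto simp: fnp_swp swapc_def)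
next
  case (scope a Q P) then show ?case by auto
qed auto

lemma ltrans_fnp: "ltrans P \<alpha> P' \<Longrightarrow> fnp P' \<subseteq> fnp P \<and> fnpre \<alpha> \<subseteq> fnp P"
proof (induction rule: ltrans.induct)
  case (str P Q P' Q' \<alpha>)
  then show ?case using scong_fnp by blast
qed auto

lemma ltrans_swp: "ltrans P \<alpha> P' \<Longrightarrow> ltrans (swp a b P) (swpre a b \<alpha>) (swp a b P')"
proof (induction rule: ltrans.induct)
  case (pre \<alpha> P Q)
  then show ?case by (auto intro: ltrans.pre)
next
  case (res c \<alpha> P P')
  then show ?case by (auto simp: fnpre_swpre swapc_inj intro!: ltrans.res)
next
  case (syn P c P' Q Q')
  then show ?case by (auto intro: ltrans.syn)
next
  case (str P Q P' Q' \<alpha>)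
  then show ?case by (meson ltrans.str scong_swp)
qed (auto intro: ltrans.intros)

lemma react_swp:
  "react1 P R \<Longrightarrow> react1 (swp a b P) (swp a b R)"
  "react2 P Q R \<Longrightarrow> react2 (swp a b P) (swp a b Q) (swp a b R)"
proof (induct P R and P Q R rule: react1_react2.inducts)
  case (tau P Q)
  then show ?case by (auto intro: react1_react2.tau)
next
  case (hid P Q R c)
  then show ?case by (auto simp: fnp_swp swapc_inj intro!: react1_react2.hid)
next
  case (syn c P S Q T)
  then show ?case by (auto intro: react1_react2.syn)
next
  case (str1 P R Q S)
  then show ?case by (meson react1_react2.str1 scong_swp)
next
  case (str2 P Q R S T U)
  then show ?case by (meson react1_react2.str2 scong_swp)
qed (auto intro: react1_react2.intros)

declare scong.trans[trans]

lemma fresh_ex: "infinite (UNIV::'c set) \<Longrightarrow> finite (F::'c set) \<Longrightarrow> \<exists>b. b \<notin> F"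
  using ex_new_if_finite by blast

lemma swp_fresh_eq: "scong (Res b (swp e b X)) (Res e X)" if "b \<notin> fnp X"
  using that by (simp add: scong.alpha scong.sym)

lemma swp_mset_invol[simp]:
  "image_mset (map_prod (swpre e b) (swp e b)) (image_mset (map_prod (swpre e b) (swp e b)) S) = S"
  by (induction S) auto

lemma Cin:
  assumes inf: "infinite (UNIV::'c set)"
  shows "ltrans Q \<alpha> Q' \<Longrightarrow> \<alpha> = In c \<Longrightarrow>
     react2 (Sum (add_mset (Out c, P1) S)) (Q::'c proc) (Par P1 Q')"
proof (induction arbitrary: P1 S rule: ltrans.induct)
  case (pre \<alpha> P Q)
  then show ?case by (simp add: react1_react2.syn)
next
  case (res e \<alpha> Q0 Q0')
  let ?Pd = "Sum (add_mset (Out c, P1) S)"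
  have ec: "e \<noteq> c" using res by auto
  obtain b where b: "b \<notin> fnp ?Pd \<union> fnp Q0 \<union> {e, c}"
    using fresh_ex[OF inf, of "fnp ?Pd \<union> fnp Q0 \<union> {e, c}"] finite_fnp by blast
  have bQ0': "b \<notin> fnp Q0'" using b ltrans_fnp[OF res.hyps(2)] by auto
  have sc: "swapc e b c = c" using b ec by (auto simp: swapc_def)
  have "react2 (Sum (add_mset (Out c, swp e b P1) (image_mset (map_prod (swpre e b) (swp e b)) S))) Q0
      (Par (swp e b P1) Q0')" using res by blast
  hence "react2 (swp e b ?Pd) Q0 (Par (swp e b P1) Q0')" using sc by simp
  from react_swp(2)[OF this, of e b]
  have "react2 ?Pd (swp e b Q0) (Par P1 (swp e b Q0'))" by simp
  hence "react2 (swp e b Q0) ?Pd (Par P1 (swp e b Q0'))" by (rule react1_react2.sym)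
  hence "react2 (Res b (swp e b Q0)) ?Pd (Res b (Par P1 (swp e b Q0')))"
    using b by (intro react1_react2.hid) auto
  hence 1: "react2 ?Pd (Res b (swp e b Q0)) (Res b (Par P1 (swp e b Q0')))" by (rule react1_react2.sym)
  have 2: "scong (Res b (swp e b Q0)) (Res e Q0)" using b by (intro swp_fresh_eq) auto
  have "scong (Res b (Par P1 (swp e b Q0'))) (Res b (Par (swp e b Q0') P1))"
    by (intro scong.ctx_res scong.par_comm)
  also have "scong \<dots> (Par (Res b (swp e b Q0')) P1)" using b by (intro scong.scope) auto
  also have "scong \<dots> (Par (Res e Q0') P1)" using bQ0' by (intro scong.ctx_par swp_fresh_eq scong.refl)
  also have "scong \<dots> (Par P1 (Res e Q0'))" by (rule scong.par_comm)
  finally have 3: "scong (Res b (Par P1 (swp e b Q0'))) (Par P1 (Res e Q0'))" .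
  show ?case by (rule react1_react2.str2[OF 1 scong.refl 2 3])
next
  case (par Q0 \<alpha> Q0' R)
  let ?Pd = "Sum (add_mset (Out c, P1) S)"
  have "react2 Q0 ?Pd (Par P1 Q0')" using par by (blast intro: react1_react2.sym)
  hence "react2 (Par Q0 R) ?Pd (Par R (Par P1 Q0'))" by (rule react1_react2.par2)
  hence 1: "react2 ?Pd (Par Q0 R) (Par R (Par P1 Q0'))" by (rule react1_react2.sym)
  have "scong (Par R (Par P1 Q0')) (Par (Par P1 Q0') R)" by (rule scong.par_comm)
  also have "scong \<dots> (Par P1 (Par Q0' R))" by (rule scong.par_assoc)
  finally show ?case by (rule react1_react2.str2[OF 1 scong.refl scong.refl])
next
  case (syn P c P' Q Q')
  then show ?case by simp
next
  case (str P Q P' Q' \<alpha>)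
  then show ?case by (meson react1_react2.str2 scong.refl scong.ctx_par)
qed

lemma G:
  assumes inf: "infinite (UNIV::'c set)"
  shows "ltrans P \<alpha> P' \<Longrightarrow> \<alpha> = Out c \<Longrightarrow> ltrans Q (In c) Q' \<Longrightarrow>
     react2 (P::'c proc) Q (Par P' Q')"
proof (induction arbitrary: Q Q' rule: ltrans.induct)
  case (pre \<alpha> P S)
  then show ?case using Cin[OF inf] by blast
next
  case (res e \<alpha> P0 P0')
  have ec: "e \<noteq> c" using res by auto
  obtain b where b: "b \<notin> fnp Q \<union> fnp P0 \<union> {e, c}"
    using fresh_ex[OF inf, of "fnp Q \<union> fnp P0 \<union> {e, c}"] finite_fnp by blast
  have bP0': "b \<notin> fnp P0'" using b ltrans_fnp[OF res.hyps(2)] by auto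
  have bQ': "b \<notin> fnp Q'" using b ltrans_fnp[OF res.prems(2)] by auto
  have sc: "swapc e b c = c" using b ec by (auto simp: swapc_def)
  have "ltrans (swp e b Q) (In c) (swp e b Q')"
    using ltrans_swp[OF res.prems(2), of e b] sc by simp
  hence "react2 P0 (swp e b Q) (Par P0' (swp e b Q'))" using res by blast
  from react_swp(2)[OF this, of e b]
  have "react2 (swp e b P0) Q (Par (swp e b P0') Q')" by simp
  hence 1: "react2 (Res b (swp e b P0)) Q (Res b (Par (swp e b P0') Q'))"
    using b by (intro react1_react2.hid) auto
  have 2: "scong (Res b (swp e b P0)) (Res e P0)" using b by (intro swp_fresh_eq) auto
  have "scong (Res b (Par (swp e b P0') Q')) (Par (Res b (swp e b P0')) Q')"
    using bQ' by (intro scong.scope)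
  also have "scong \<dots> (Par (Res e P0') Q')" using bP0' by (intro scong.ctx_par swp_fresh_eq scong.refl)
  finally have 3: "scong (Res b (Par (swp e b P0') Q')) (Par (Res e P0') Q')" .
  show ?case by (rule react1_react2.str2[OF 1 2 scong.refl 3])
next
  case (par P0 \<alpha> P0' R)
  have "react2 P0 Q (Par P0' Q')" using par by blast
  hence 1: "react2 (Par P0 R) Q (Par R (Par P0' Q'))" by (rule react1_react2.par2)
  have "scong (Par R (Par P0' Q')) (Par (Par P0' Q') R)" by (rule scong.par_comm)
  also have "scong \<dots> (Par P0' (Par Q' R))" by (rule scong.par_assoc)
  also have "scong \<dots> (Par P0' (Par R Q'))" by (intro scong.ctx_par scong.refl scong.par_comm)
  also have "scong \<dots> (Par (Par P0' R) Q')" by (rule scong.sym, rule scong.par_assoc)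
  finally show ?case by (rule react1_react2.str2[OF 1 scong.refl scong.refl])
next
  case (syn P c P' Q Q')
  then show ?case by simp
next
  case (str P Q P' Q' \<alpha>)
  then show ?case by (meson react1_react2.str2 scong.refl scong.ctx_par)
qed

definition EX2 :: "'c proc \<Rightarrow> 'c proc \<Rightarrow> 'c proc \<Rightarrow> bool" where
  "EX2 x y z \<longleftrightarrow> (\<exists>b x' y'. scong z (Par x' y') \<and>
               ((ltrans x (In b) x' \<and> ltrans y (Out b) y') \<or>
                (ltrans x (Out b) x' \<and> ltrans y (In b) y')))"

lemma syn_tau: "ltrans P (Out c) P' \<Longrightarrow> ltrans Q (In c) Q' \<Longrightarrow> scong R (Par P' Q') \<Longrightarrow> ltrans (Par P Q) Tau R"
  by (meson ltrans.str ltrans.syn scong.refl scong.sym)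

lemma syn_tau': "ltrans P (In c) P' \<Longrightarrow> ltrans Q (Out c) Q' \<Longrightarrow> scong R (Par P' Q') \<Longrightarrow> ltrans (Par P Q) Tau R"
proof -
  assume a: "ltrans P (In c) P'" "ltrans Q (Out c) Q'" "scong R (Par P' Q')"
  have "ltrans (Par Q P) Tau (Par Q' P')" using a by (intro ltrans.syn)
  moreover have "scong (Par Q P) (Par P Q)" by (rule scong.par_comm)
  moreover have "scong (Par Q' P') R" using a(3) by (meson scong.par_comm scong.sym scong.trans)
  ultimately show ?thesis by (meson ltrans.str)
qed

lemma react_ltrans:
  "react1 P R \<Longrightarrow> ltrans P Tau R"
  "react2 P Q R \<Longrightarrow> EX2 P Q R"
proof (induct P R and P Q R rule: react1_react2.inducts)
  case (tau P Q)
  then show ?case by (rule ltrans.pre)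
next
  case (res P P' a)
  then show ?case by (intro ltrans.res) auto
next
  case (par1 P P' Q)
  then show ?case by (blast intro: ltrans.par)
next
  case (int P Q R)
  then show ?case unfolding EX2_def by (meson syn_tau syn_tau')
next
  case (hid P Q R a)
  then obtain b x' y' where r: "scong R (Par x' y')" and
    c: "(ltrans P (In b) x' \<and> ltrans Q (Out b) y') \<or> (ltrans P (Out b) x' \<and> ltrans Q (In b) y')"
    unfolding EX2_def by blast
  have ab: "a \<noteq> b" and ay: "a \<notin> fnp y'" using c hid(3) ltrans_fnp by fastforce+
  have "scong (Res a R) (Res a (Par x' y'))" using r by (rule scong.ctx_res)
  also have "scong \<dots> (Par (Res a x') y')" using ay by (rule scong.scope)
  finally have "scong (Res a R) (Par (Res a x') y')" .
  moreover have "ltrans P (In b) x' \<Longrightarrow> ltrans (Res a P) (In b) (Res a x')"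
    using ab by (intro ltrans.res) auto
  moreover have "ltrans P (Out b) x' \<Longrightarrow> ltrans (Res a P) (Out b) (Res a x')"
    using ab by (intro ltrans.res) auto
  ultimately show ?case unfolding EX2_def using c by blast
next
  case (par2 P Q R S)
  then obtain b x' y' where r: "scong R (Par x' y')" and
    c: "(ltrans P (In b) x' \<and> ltrans Q (Out b) y') \<or> (ltrans P (Out b) x' \<and> ltrans Q (In b) y')"
    unfolding EX2_def by blast
  have "scong (Par S R) (Par S (Par x' y'))" using r by (intro scong.ctx_par scong.refl)
  also have "scong \<dots> (Par (Par S x') y')" by (rule scong.sym, rule scong.par_assoc)
  also have "scong \<dots> (Par (Par x' S) y')" by (intro scong.ctx_par scong.refl scong.par_comm)
  finally have "scong (Par S R) (Par (Par x' S) y')" .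
  then show ?case unfolding EX2_def using c by (meson ltrans.par)
next
  case (syn a P S Q T)
  then show ?case unfolding EX2_def by (meson ltrans.pre scong.refl)
next
  case (sym P Q R)
  then obtain b x' y' where r: "scong R (Par x' y')" and
    c: "(ltrans P (In b) x' \<and> ltrans Q (Out b) y') \<or> (ltrans P (Out b) x' \<and> ltrans Q (In b) y')"
    unfolding EX2_def by blast
  have "scong R (Par y' x')" using r by (meson scong.par_comm scong.trans)
  then show ?case unfolding EX2_def using c by blast
next
  case (str1 P R Q S)
  then show ?case by (meson ltrans.str)
next
  case (str2 P Q R S T U)
  then obtain b x' y' where r: "scong R (Par x' y')" and
    c: "(ltrans P (In b) x' \<and> ltrans Q (Out b) y') \<or> (ltrans P (Out b) x' \<and> ltrans Q (In b) y')"
    unfolding EX2_def by blast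
  have "scong U (Par x' y')" using r str2 by (meson scong.sym scong.trans)
  moreover have "\<And>\<alpha> X. ltrans P \<alpha> X \<Longrightarrow> ltrans S \<alpha> X" using str2 by (meson ltrans.str scong.refl)
  moreover have "\<And>\<alpha> X. ltrans Q \<alpha> X \<Longrightarrow> ltrans T \<alpha> X" using str2 by (meson ltrans.str scong.refl)
  ultimately show ?case unfolding EX2_def using c by blast
qed

primrec wt :: "'c proc \<Rightarrow> nat" where
  "wt (Sum M) = sum_mset (image_mset (\<lambda>x. Suc (snd x)) (image_mset (map_prod id wt) M))"
| "wt (Par P Q) = wt P + wt Q"
| "wt (Res a P) = wt P"

fun kind :: "'c prefix \<Rightarrow> nat" where
  "kind Tau = 0" | "kind (In a) = 1" | "kind (Out a) = 2"

primrec hasK :: "nat \<Rightarrow> 'c proc \<Rightarrow> bool" where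
  "hasK k (Sum M) = (\<exists>x\<in>#M. kind (fst x) = k)"
| "hasK k (Par P Q) = (hasK k P \<or> hasK k Q)"
| "hasK k (Res a P) = hasK k P"

lemma kind_swpre[simp]: "kind (swpre a b p) = kind p" by (cases p) auto

lemma wt_swp[simp]: "wt (swp a b P) = wt P"
proof (induction P)
  case (Sum M)
  then show ?case by (auto simp: multiset.map_comp comp_def intro!: arg_cong[where f=sum_mset] multiset.map_cong0)
qed auto

lemma hasK_swp[simp]: "hasK k (swp a b P) = hasK k P"
  by (induction P) auto

lemma scong_wt: "scong P Q \<Longrightarrow> wt P = wt Q \<and> hasK k P = hasK k Q"
  by (induction rule: scong.induct) auto

lemma ltrans_wt: "ltrans P \<alpha> P' \<Longrightarrow> \<alpha> \<noteq> Tau \<Longrightarrow> wt P' < wt P \<and> hasK (kind \<alpha>) P"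
proof (induction rule: ltrans.induct)
  case (str P Q P' Q' \<alpha>)
  then show ?case using scong_wt by metis
qed auto

lemma wt0: "wt P = 0 \<Longrightarrow> scong P (Sum {#})"
proof (induction P)
  case (Sum M) then show ?case by (auto intro: scong.refl)
next
  case (Par P Q)
  then have "scong (Par P Q) (Par (Sum {#}) (Sum {#}))" by (auto intro: scong.ctx_par)
  then show ?case by (meson scong.par_unit scong.trans)
next
  case (Res a P)
  then have "scong (Res a P) (Res a (Sum {#}))" by (auto intro: scong.ctx_res)
  then show ?case by (meson scong.res_nil scong.trans)
qed

lemma pre_inv: "ltrans (Sum {#(\<beta>, Sum {#})#}) \<alpha> y \<Longrightarrow> \<alpha> \<noteq> Tau \<Longrightarrow> \<beta> \<noteq> Tau \<Longrightarrow>
  \<alpha> = \<beta> \<and> scong y (Sum {#})"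
proof -
  assume a: "ltrans (Sum {#(\<beta>, Sum {#})#}) \<alpha> y" "\<alpha> \<noteq> Tau" "\<beta> \<noteq> Tau"
  from ltrans_wt[OF a(1,2)] have w: "wt y = 0" and k: "kind \<alpha> = kind \<beta>" by auto
  from ltrans_fnp[OF a(1)] have "fnpre \<alpha> \<subseteq> fnpre \<beta>" by auto
  with k a(2,3) have "\<alpha> = \<beta>" by (cases \<alpha>; cases \<beta>) auto
  with wt0[OF w] show ?thesis by simp
qed

lemma tau_react:
  assumes inf: "infinite (UNIV::'c set)"
  shows "ltrans x \<alpha> y \<Longrightarrow> \<alpha> = Tau \<Longrightarrow> react1 (x::'c proc) y"
proof (induction rule: ltrans.induct)
  case (pre \<alpha> P Q) then show ?case by (simp add: react1_react2.tau)
next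
  case (res a \<alpha> P P') then show ?case by (simp add: react1_react2.res)
next
  case (par P \<alpha> P' Q) then show ?case by (simp add: react1_react2.par1)
next
  case (syn P c P' Q Q')
  then have "react2 P Q (Par P' Q')" using G[OF inf] by blast
  then show ?case by (rule react1_react2.int)
next
  case (str P Q P' Q' \<alpha>) then show ?case by (meson react1_react2.str1)
qed

lemma par_nil_l: "scong (Par (Sum {#}) y) y"
  by (meson scong.par_comm scong.par_unit scong.trans)

lemma part_in:
  assumes inf: "infinite (UNIV::'c set)"
  shows "ltrans x (In a) y \<longleftrightarrow> react2 (x::'c proc) (Sum {#(Out a, Sum {#})#}) y"
proof
  assume "ltrans x (In a) y"
  with G[OF inf] have "react2 (Sum {#(Out a, Sum {#})#}) x (Par (Sum {#}) y)"
    by (metis add_mset_add_single ltrans.pre add_0)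
  then show "react2 x (Sum {#(Out a, Sum {#})#}) y"
    by (meson par_nil_l react1_react2.str2 react1_react2.sym scong.refl)
next
  assume "react2 x (Sum {#(Out a, Sum {#})#}) y"
  then have "EX2 x (Sum {#(Out a, Sum {#})#}) y" by (rule react_ltrans(2))
  then obtain b x' y' where r: "scong y (Par x' y')" and
    c: "(ltrans x (In b) x' \<and> ltrans (Sum {#(Out a, Sum {#})#}) (Out b) y') \<or>
        (ltrans x (Out b) x' \<and> ltrans (Sum {#(Out a, Sum {#})#}) (In b) y')"
    unfolding EX2_def by blast
  from c have "ltrans x (In b) x'" and "b = a" and "scong y' (Sum {#})"
    using pre_inv by fastforce+
  then have "scong y x'" using r
    by (meson scong.ctx_par scong.par_unit scong.refl scong.trans)
  then show "ltrans x (In a) y" using \<open>ltrans x (In b) x'\<close> \<open>b = a\<close>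
    by (meson ltrans.str scong.refl scong.sym)
qed

lemma part_out:
  assumes inf: "infinite (UNIV::'c set)"
  shows "ltrans x (Out a) y \<longleftrightarrow> react2 (x::'c proc) (Sum {#(In a, Sum {#})#}) y"
proof
  assume "ltrans x (Out a) y"
  with G[OF inf] have "react2 x (Sum {#(In a, Sum {#})#}) (Par y (Sum {#}))"
    by (metis add_mset_add_single ltrans.pre add_0)
  then show "react2 x (Sum {#(In a, Sum {#})#}) y"
    by (meson scong.par_unit react1_react2.str2 scong.refl)
next
  assume "react2 x (Sum {#(In a, Sum {#})#}) y"
  then have "EX2 x (Sum {#(In a, Sum {#})#}) y" by (rule react_ltrans(2))
  then obtain b x' y' where r: "scong y (Par x' y')" and
    c: "(ltrans x (In b) x' \<and> ltrans (Sum {#(In a, Sum {#})#}) (Out b) y') \<or>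
        (ltrans x (Out b) x' \<and> ltrans (Sum {#(In a, Sum {#})#}) (In b) y')"
    unfolding EX2_def by blast
  from c have "ltrans x (Out b) x'" and "b = a" and "scong y' (Sum {#})"
    using pre_inv by fastforce+
  then have "scong y x'" using r
    by (meson scong.ctx_par scong.par_unit scong.refl scong.trans)
  then show "ltrans x (Out a) y" using \<open>ltrans x (Out b) x'\<close> \<open>b = a\<close>
    by (meson ltrans.str scong.refl scong.sym)
qed

theorem lemma1:
  fixes a :: "'c::countable" and x y z :: "'c proc"
  assumes "infinite (UNIV :: 'c set)"
  shows "(ltrans x Tau y \<longleftrightarrow> react1 x y)
       \<and> (ltrans x (In a) y \<longleftrightarrow> react2 x (Pre (Out a) Nil) y)
       \<and> (ltrans x (Out a) y \<longleftrightarrow> react2 x (Pre (In a) Nil) y)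
       \<and> (react2 x y z \<longleftrightarrow>
            (\<exists>b x' y'. scong z (Par x' y') \<and>
               ((ltrans x (In b) x' \<and> ltrans y (Out b) y') \<or>
                (ltrans x (Out b) x' \<and> ltrans y (In b) y'))))"
proof (intro conjI)
  show "ltrans x Tau y \<longleftrightarrow> react1 x y"
    using tau_react[OF assms] react_ltrans(1) by blast
  show "ltrans x (In a) y \<longleftrightarrow> react2 x (Pre (Out a) Nil) y" by (rule part_in[OF assms])
  show "ltrans x (Out a) y \<longleftrightarrow> react2 x (Pre (In a) Nil) y" by (rule part_out[OF assms])
  show "react2 x y z \<longleftrightarrow>
            (\<exists>b x' y'. scong z (Par x' y') \<and>
               ((ltrans x (In b) x' \<and> ltrans y (Out b) y') \<or>
                (ltrans x (Out b) x' \<and> ltrans y (In b) y')))"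
  proof
    assume "react2 x y z" then show "\<exists>b x' y'. scong z (Par x' y') \<and>
               ((ltrans x (In b) x' \<and> ltrans y (Out b) y') \<or>
                (ltrans x (Out b) x' \<and> ltrans y (In b) y'))"
      using react_ltrans(2) unfolding EX2_def by blast
  next
    assume "\<exists>b x' y'. scong z (Par x' y') \<and>
               ((ltrans x (In b) x' \<and> ltrans y (Out b) y') \<or>
                (ltrans x (Out b) x' \<and> ltrans y (In b) y'))"
    then obtain b x' y' where r: "scong z (Par x' y')" and
      c: "(ltrans x (In b) x' \<and> ltrans y (Out b) y') \<or> (ltrans x (Out b) x' \<and> ltrans y (In b) y')"
      by blast
    from c show "react2 x y z"
    proof
      assume h: "ltrans x (In b) x' \<and> ltrans y (Out b) y'"
      then have "react2 y x (Par y' x')" using G[OF assms] by blast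
      then have "react2 x y (Par y' x')" by (rule react1_react2.sym)
      moreover have "scong (Par y' x') z" using r by (meson scong.par_comm scong.sym scong.trans)
      ultimately show ?thesis by (meson react1_react2.str2 scong.refl)
    next
      assume h: "ltrans x (Out b) x' \<and> ltrans y (In b) y'"
      then have "react2 x y (Par x' y')" using G[OF assms] by blast
      then show ?thesis using r by (meson react1_react2.str2 scong.refl scong.sym)
    qed
  qed
qed

end
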